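(* Let $L>0$. There is no function $\theta\in C^3([-L,L])$, $\theta\not\equiv0$, solving the third-order ODE $$\tfrac13\,\theta=\theta^{3}\bigl(\theta'''+\theta\bigr)\quad\text{on }(-L,L)$$ with $\theta(-L)=\theta(L)=0$.
   Context: This is the profile equation for separable blow-up solutions $u=(T-t)^{-1/3}\theta(x)$ of the nonlinear dispersion equation $u_t=u^3(u_{xxx}+u)$. For a non-vanishing solution one has the identity $-\tfrac{1}{3\theta}=\theta'\theta''-\int(\theta'')^2\,dx+\tfrac12\theta^2$ (up to an additive constant), where $\int(\theta'')^2dx$ denotes an antiderivative. *)

theory Defs
  imports "HOL-Analysis.Analysis"
begin

definition C3_on_interval ::
  "real \<Rightarrow> real \<Rightarrow> (real \<Rightarrow> real) \<Rightarrow> (real \<Rightarrow> real) \<Rightarrow> (real \<Rightarrow> real) \<Rightarrow> (real \<Rightarrow> real) \<Rightarrow> bool"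
  where "C3_on_interval a b f d1 d2 d3 \<longleftrightarrow>
     (\<forall>x\<in>{a..b}. (f has_real_derivative d1 x) (at x within {a..b})
                \<and> (d1 has_real_derivative d2 x) (at x within {a..b})
                \<and> (d2 has_real_derivative d3 x) (at x within {a..b}))
     \<and> continuous_on {a..b} d3"

end

theory Submission
  imports Defs
begin

theorem mainTheorem3:
  fixes L :: real
  assumes "L > 0"
  shows "\<not> (\<exists>\<theta> d1 d2 d3.
            C3_on_interval (-L) L \<theta> d1 d2 d3
          \<and> (\<exists>x\<in>{-L..L}. \<theta> x \<noteq> 0)
          \<and> (\<forall>x\<in>{-L<..<L}. \<theta> x / 3 = \<theta> x ^ 3 * (d3 x + \<theta> x))
          \<and> \<theta> (-L) = 0 \<and> \<theta> L = 0)"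
proof
  assume "\<exists>\<theta> d1 d2 d3.
            C3_on_interval (-L) L \<theta> d1 d2 d3
          \<and> (\<exists>x\<in>{-L..L}. \<theta> x \<noteq> 0)
          \<and> (\<forall>x\<in>{-L<..<L}. \<theta> x / 3 = \<theta> x ^ 3 * (d3 x + \<theta> x))
          \<and> \<theta> (-L) = 0 \<and> \<theta> L = 0"
  then obtain \<theta> d1 d2 d3 x0 where C: "C3_on_interval (-L) L \<theta> d1 d2 d3"
    and x0: "x0 \<in> {-L..L}" "\<theta> x0 \<noteq> 0"
    and eq: "\<forall>x\<in>{-L<..<L}. \<theta> x / 3 = \<theta> x ^ 3 * (d3 x + \<theta> x)"
    and bl: "\<theta> (-L) = 0" and br: "\<theta> L = 0" by blast
  have contt: "continuous_on {-L..L} \<theta>"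
    using C unfolding C3_on_interval_def
    by (auto simp: continuous_on_eq_continuous_within intro: DERIV_continuous)
  have "bounded (d3 ` {-L..L})"
    using C unfolding C3_on_interval_def
    by (intro compact_imp_bounded compact_continuous_image) auto
  then obtain B where B: "B > 0" "\<forall>y\<in>d3 ` {-L..L}. norm y \<le> B"
    using bounded_pos by blast
  define e where "e = min (\<bar>\<theta> x0\<bar> / 2) (1 / (2 * (B + 1)))"
  have e0: "e > 0" using x0 B by (simp add: e_def)
  have e1: "e \<le> \<bar>\<theta> x0\<bar>" by (simp add: e_def)
  have e2: "e \<le> 1 / (2 * (B + 1))" by (simp add: e_def)
  have "continuous_on {x0..L} (\<lambda>x. \<bar>\<theta> x\<bar>)"
    using x0 by (intro continuous_intros continuous_on_subset[OF contt]) auto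
  then obtain x where x: "x0 \<le> x" "x \<le> L" "\<bar>\<theta> x\<bar> = e"
    using IVT2'[of "\<lambda>x. \<bar>\<theta> x\<bar>" L e x0] e0 e1 br x0 by auto
  have xi: "x \<in> {-L<..<L}"
  proof -
    have "x \<noteq> L" using x br e0 by auto
    moreover have "x \<noteq> -L" using x bl e0 by auto
    ultimately show ?thesis using x x0 by auto
  qed
  have tx: "\<theta> x \<noteq> 0" using x e0 by auto
  have "\<theta> x / 3 = \<theta> x ^ 3 * (d3 x + \<theta> x)" using eq xi by blast
  hence "\<theta> x * (1 / 3) = \<theta> x * (\<theta> x ^ 2 * (d3 x + \<theta> x))"
    by (simp add: power2_eq_square power3_eq_cube algebra_simps)
  hence one: "1 / 3 = \<theta> x ^ 2 * (d3 x + \<theta> x)" by (simp only: mult_left_cancel[OF tx])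
  have db: "\<bar>d3 x\<bar> \<le> B" using B xi by auto
  have "\<bar>d3 x + \<theta> x\<bar> \<le> B + 1"
    using db x e2 e0 B by (smt (verit) divide_le_eq_1 )
  hence "\<theta> x ^ 2 * (d3 x + \<theta> x) \<le> e ^ 2 * (B + 1)"
    using x by (smt (verit) abs_le_iff mult_left_mono mult_minus_right power2_abs zero_le_power2)
  also have "\<dots> \<le> e * (1/2)"
  proof -
    have "e * (B + 1) \<le> 1/2" using e2 B by (simp add: field_simps)
    thus ?thesis using e0 by (simp add: power2_eq_square mult.assoc mult_left_mono)
  qed
  also have "\<dots> \<le> 1/4"
  proof -
    have "e * 2 + B * (e * 2) \<le> 1" using e2 B by (simp add: field_simps)
    moreover have "B * (e * 2) \<ge> 0" using B e0 by simp
    ultimately show ?thesis by linarith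
  qed
  finally show False using one by simp
qed

end
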